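(* There exist two disjoint thin sets $T_0,T_1\subseteq\mathbb{Z}_2^\omega$, neither of which is Borel, such that $T_0\cup T_1=\mathbb{Z}_2^\omega$.
   Context: $\mathbb{Z}_2^\omega$ is the Cantor cube of infinite binary sequences indexed by $\omega=\{0,1,2,\dots\}$, with the product topology. A set $T\subseteq\mathbb{Z}_2^\omega$ is thin if for every $n\in\omega$ the map $x\mapsto x|_{\omega\setminus\{n\}}$ is injective on $T$ (equivalently, no two distinct elements of $T$ differ in exactly one coordinate). *)

theory Defs
  imports "HOL-Analysis.Analysis"
begin

definition cantor_top :: "(nat \<Rightarrow> bool) topology" where
  "cantor_top = product_topology (\<lambda>_. discrete_topology (UNIV :: bool set)) (UNIV :: nat set)"

definition cantor_borel :: "(nat \<Rightarrow> bool) set set" where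
  "cantor_borel = sigma_sets (UNIV :: (nat \<Rightarrow> bool) set) {U. openin cantor_top U}"

definition thin :: "(nat \<Rightarrow> bool) set \<Rightarrow> bool" where
  "thin T \<longleftrightarrow> (\<forall>n. inj_on (\<lambda>x. restrict x (UNIV - {n})) T)"

end

theory Submission
  imports Defs
begin

definition cyl :: "(nat \<Rightarrow> bool) \<Rightarrow> nat \<Rightarrow> (nat \<Rightarrow> bool) set" where
  "cyl s n = {y. \<forall>i<n. y i = s i}"

definition nwd :: "(nat \<Rightarrow> bool) set \<Rightarrow> bool" where
  "nwd N \<longleftrightarrow> (\<forall>s k. \<exists>t m. cyl t m \<subseteq> cyl s k \<and> cyl t m \<inter> N = {})"

definition meager :: "(nat \<Rightarrow> bool) set \<Rightarrow> bool" where
  "meager M \<longleftrightarrow> (\<exists>F. (\<forall>n::nat. nwd (F n)) \<and> M \<subseteq> (\<Union>n. F n))"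

definition copen :: "(nat \<Rightarrow> bool) set \<Rightarrow> bool" where
  "copen U \<longleftrightarrow> (\<forall>x\<in>U. \<exists>n. cyl x n \<subseteq> U)"

definition bp :: "(nat \<Rightarrow> bool) set \<Rightarrow> bool" where
  "bp A \<longleftrightarrow> (\<exists>U. copen U \<and> meager ((A - U) \<union> (U - A)))"

definition flp :: "nat \<Rightarrow> (nat \<Rightarrow> bool) \<Rightarrow> (nat \<Rightarrow> bool)" where
  "flp k x = x(k := \<not> x k)"

lemma cyl_mono: "m \<le> n \<Longrightarrow> cyl s n \<subseteq> cyl s m"
  by (auto simp: cyl_def)

lemma cyl_self[simp]: "s \<in> cyl s n"
  by (auto simp: cyl_def)

lemma cyl_eq: "y \<in> cyl s n \<Longrightarrow> cyl y n = cyl s n"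
  by (auto simp: cyl_def)

lemma cyl_cong: "(\<And>i. i < n \<Longrightarrow> s i = t i) \<Longrightarrow> cyl s n = cyl t n"
  by (auto simp: cyl_def)

lemma flip_flip[simp]: "flp k (flp k x) = x"
  by (auto simp: flp_def)

lemma flip_cyl: "flp k -` cyl t m = cyl (flp k t) m"
  by (auto simp: cyl_def flp_def)

lemma nwd_flip: assumes "nwd N" shows "nwd (flp k -` N)"
  unfolding nwd_def
proof (intro allI)
  fix s k0
  obtain t m where tm: "cyl t m \<subseteq> cyl (flp k s) k0" "cyl t m \<inter> N = {}"
    using assms unfolding nwd_def by blast
  have "cyl (flp k t) m = flp k -` cyl t m" by (simp add: flip_cyl)
  also have "\<dots> \<subseteq> flp k -` cyl (flp k s) k0" using tm(1) by (rule vimage_mono)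
  also have "\<dots> = cyl s k0" by (simp add: flip_cyl)
  finally have 1: "cyl (flp k t) m \<subseteq> cyl s k0" .
  have "cyl (flp k t) m \<inter> flp k -` N = flp k -` (cyl t m \<inter> N)"
    by (simp add: flip_cyl)
  then have 2: "cyl (flp k t) m \<inter> flp k -` N = {}" using tm by simp
  show "\<exists>t m. cyl t m \<subseteq> cyl s k0 \<and> cyl t m \<inter> flp k -` N = {}"
    using 1 2 by (intro exI[of _ "flp k t"] exI[of _ m]) simp
qed

lemma meager_flip: assumes "meager M" shows "meager (flp k -` M)"
proof -
  obtain F :: "nat \<Rightarrow> (nat \<Rightarrow> bool) set" where FF: "(\<forall>n. nwd (F n)) \<and> M \<subseteq> (\<Union>n. F n)"
    using assms unfolding meager_def by (elim exE)
  have F1: "\<And>n. nwd (F n)" using FF by simp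
  have F2: "M \<subseteq> (\<Union>n. F n)" using FF by simp
  define G where "G n = flp k -` F n" for n
  have G1: "\<forall>n. nwd (G n)" unfolding G_def using F1 nwd_flip by blast
  have G2: "flp k -` M \<subseteq> (\<Union>n. G n)"
  proof
    fix x assume "x \<in> flp k -` M"
    then have "flp k x \<in> M" by simp
    then obtain n where "flp k x \<in> F n" using F2 by blast
    then have "x \<in> G n" unfolding G_def by simp
    then show "x \<in> (\<Union>n. G n)" by blast
  qed
  show ?thesis unfolding meager_def by (rule exI[of _ G]) (use G1 G2 in simp)
qed

lemma meager_subset: "meager M \<Longrightarrow> N \<subseteq> M \<Longrightarrow> meager N"
  unfolding meager_def by blast

lemma meager_empty: "meager {}"
proof -
  have "nwd {}" unfolding nwd_def by blast
  then show ?thesis unfolding meager_def by (intro exI[of _ "\<lambda>_::nat. {}"]) simp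
qed

lemma meager_UN: assumes "\<And>i::nat. meager (M i)" shows "meager (\<Union>i. M i)"
proof -
  have "\<forall>i. \<exists>F. (\<forall>n::nat. nwd (F n)) \<and> M i \<subseteq> (\<Union>n. F n)" using assms unfolding meager_def by blast
  then obtain FF where FF: "\<And>i. (\<forall>n::nat. nwd (FF i n)) \<and> M i \<subseteq> (\<Union>n. FF i n)" by metis
  define G where "G k = FF (fst (prod_decode k)) (snd (prod_decode k))" for k
  have "\<forall>k. nwd (G k)" using FF unfolding G_def by blast
  moreover have "(\<Union>i. M i) \<subseteq> (\<Union>k. G k)"
  proof
    fix x assume "x \<in> (\<Union>i. M i)"
    then obtain i n where "x \<in> FF i n" using FF by blast
    then have "x \<in> G (prod_encode (i, n))" unfolding G_def by simp
    then show "x \<in> (\<Union>k. G k)" by blast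
  qed
  ultimately show ?thesis unfolding meager_def by blast
qed

lemma meager_Un: assumes "meager A" "meager B" shows "meager (A \<union> B)"
proof -
  have "A \<union> B = (\<Union>i::nat. if i = 0 then A else B)" by auto
  moreover have "meager (if i = 0 then A else B)" for i::nat using assms by simp
  ultimately show ?thesis using meager_UN by metis
qed

lemma baire: "\<not> meager (cyl s k)"
proof
  assume "meager (cyl s k)"
  then obtain F :: "nat \<Rightarrow> (nat \<Rightarrow> bool) set" where F: "\<And>n. nwd (F n)" "cyl s k \<subseteq> (\<Union>n. F n)" unfolding meager_def by blast
  have "\<forall>n s k. \<exists>t m. k < m \<and> cyl t m \<subseteq> cyl s k \<and> cyl t m \<inter> F n = {}"
  proof (intro allI)
    fix n s k
    obtain t m where tm: "cyl t m \<subseteq> cyl s k" "cyl t m \<inter> F n = {}" using F(1)[of n] unfolding nwd_def by blast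
    have "cyl t (max m (Suc k)) \<subseteq> cyl t m" by (rule cyl_mono) simp
    then show "\<exists>t m. k < m \<and> cyl t m \<subseteq> cyl s k \<and> cyl t m \<inter> F n = {}"
      using tm by (intro exI[of _ t] exI[of _ "max m (Suc k)"]) auto
  qed
  then obtain T M where TM: "\<And>n s k. k < M n s k \<and> cyl (T n s k) (M n s k) \<subseteq> cyl s k \<and> cyl (T n s k) (M n s k) \<inter> F n = {}"
    by metis
  define P where "P = rec_nat (s, k) (\<lambda>n p. (T n (fst p) (snd p), M n (fst p) (snd p)))"
  have P0: "P 0 = (s, k)" unfolding P_def by simp
  have PS: "P (Suc n) = (T n (fst (P n)) (snd (P n)), M n (fst (P n)) (snd (P n)))" for n
    unfolding P_def by simp
  define C where "C n = cyl (fst (P n)) (snd (P n))" for n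
  have stp: "C (Suc n) \<subseteq> C n" "C (Suc n) \<inter> F n = {}" "snd (P n) < snd (P (Suc n))" for n
    using TM[where n=n and s="fst (P n)" and k="snd (P n)"] unfolding C_def PS by auto
  have nest: "C j \<subseteq> C n" if "n \<le> j" for n j
    using that
  proof (induction j rule: dec_induct)
    case base then show ?case by simp
  next
    case (step j) then show ?case using stp(1)[of j] by blast
  qed
  have grow: "n \<le> snd (P n)" for n
  proof (induction n)
    case 0 then show ?case by simp
  next
    case (Suc n) then show ?case using stp(3)[of n] by simp
  qed
  define z where "z i = fst (P (Suc i)) i" for i
  have zC: "z \<in> C n" for n
    unfolding C_def cyl_def
  proof (intro CollectI allI impI)
    fix i assume i: "i < snd (P n)"
    show "z i = fst (P n) i"
    proof (cases "n \<le> Suc i")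
      case True
      have "fst (P (Suc i)) \<in> C (Suc i)" unfolding C_def by simp
      then have "fst (P (Suc i)) \<in> C n" using nest[OF True] by blast
      then show ?thesis using i unfolding z_def C_def cyl_def by simp
    next
      case False
      have "fst (P n) \<in> C n" unfolding C_def by simp
      then have "fst (P n) \<in> C (Suc i)" using nest[of "Suc i" n] False by auto
      moreover have "i < snd (P (Suc i))" using grow[of "Suc i"] by simp
      ultimately show ?thesis unfolding z_def C_def cyl_def by simp
    qed
  qed
  have "z \<in> cyl s k" using zC[of 0] unfolding C_def P0 by simp
  then obtain n where "z \<in> F n" using F(2) by blast
  moreover have "z \<in> C (Suc n)" by (rule zC)
  ultimately show False using stp(2)[of n] by blast
qed

lemma copen_open: assumes "openin cantor_top U" shows "copen U"
  unfolding copen_def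
proof
  fix x assume "x \<in> U"
  then obtain V where V: "finite {i \<in> UNIV. V i \<noteq> topspace (discrete_topology (UNIV::bool set))}"
     "x \<in> Pi\<^sub>E UNIV V" "Pi\<^sub>E UNIV V \<subseteq> U"
    using assms unfolding cantor_top_def openin_product_topology_alt by blast
  have fin: "finite {i. V i \<noteq> UNIV}" using V(1) by simp
  obtain n where n: "\<And>i. i \<in> {i. V i \<noteq> UNIV} \<Longrightarrow> i < n"
    using finite_nat_bounded[OF fin] by (auto simp: lessThan_def)
  have "cyl x n \<subseteq> Pi\<^sub>E UNIV V"
  proof
    fix y assume y: "y \<in> cyl x n"
    have "y i \<in> V i" for i
    proof (cases "i < n")
      case True then show ?thesis using y V(2) by (auto simp: cyl_def PiE_def)
    next
      case False then show ?thesis using n[of i] by auto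
    qed
    then show "y \<in> Pi\<^sub>E UNIV V" by (simp add: PiE_def)
  qed
  then show "\<exists>n. cyl x n \<subseteq> U" using V(3) by blast
qed

lemma bp_open: "copen U \<Longrightarrow> bp U"
  unfolding bp_def using meager_empty by auto

lemma bp_compl: assumes "bp A" shows "bp (UNIV - A)"
proof -
  obtain U where U: "copen U" "meager ((A - U) \<union> (U - A))" using assms unfolding bp_def by blast
  define V where "V = {x. \<exists>n. cyl x n \<inter> U = {}}"
  define N where "N = {x. x \<notin> U \<and> x \<notin> V}"
  have cV: "copen V" unfolding copen_def
  proof
    fix x assume "x \<in> V"
    then obtain n where n: "cyl x n \<inter> U = {}" unfolding V_def by blast
    have "cyl x n \<subseteq> V"
    proof
      fix y assume "y \<in> cyl x n"
      then have "cyl y n = cyl x n" by (rule cyl_eq)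
      then show "y \<in> V" using n unfolding V_def by auto
    qed
    then show "\<exists>n. cyl x n \<subseteq> V" by blast
  qed
  have "nwd N" unfolding nwd_def
  proof (intro allI)
    fix s k
    show "\<exists>t m. cyl t m \<subseteq> cyl s k \<and> cyl t m \<inter> N = {}"
    proof (cases "cyl s k \<inter> U = {}")
      case True
      have "cyl s k \<inter> N = {}"
      proof (rule ccontr)
        assume "cyl s k \<inter> N \<noteq> {}"
        then obtain x where x: "x \<in> cyl s k" "x \<in> N" by blast
        then have "cyl x k \<inter> U = {}" using True cyl_eq[OF x(1)] by simp
        then show False using x(2) unfolding N_def V_def by blast
      qed
      then show ?thesis by blast
    next
      case False
      then obtain y where y: "y \<in> cyl s k" "y \<in> U" by blast
      then obtain m where m: "cyl y m \<subseteq> U" using U(1) unfolding copen_def by blast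
      have "cyl y (max m k) \<subseteq> cyl y k" by (rule cyl_mono) simp
      then have 1: "cyl y (max m k) \<subseteq> cyl s k" using cyl_eq[OF y(1)] by simp
      have "cyl y (max m k) \<subseteq> cyl y m" by (rule cyl_mono) simp
      then have "cyl y (max m k) \<subseteq> U" using m by blast
      then have "cyl y (max m k) \<inter> N = {}" unfolding N_def by blast
      then show ?thesis using 1 by blast
    qed
  qed
  then have "meager N" unfolding meager_def
    by (intro exI[of _ "\<lambda>_::nat. N"]) auto
  then have mg: "meager (((A - U) \<union> (U - A)) \<union> N)" using U(2) meager_Un by blast
  have "V \<inter> U = {}" unfolding V_def using cyl_self by blast
  then have "((UNIV - A) - V) \<union> (V - (UNIV - A)) \<subseteq> ((A - U) \<union> (U - A)) \<union> N"
    unfolding N_def by blast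
  then show ?thesis unfolding bp_def using cV mg meager_subset by blast
qed

lemma bp_UN: assumes "\<And>i::nat. bp (A i)" shows "bp (\<Union>i. A i)"
proof -
  obtain U where U: "\<And>i. copen (U i) \<and> meager ((A i - U i) \<union> (U i - A i))"
    using assms unfolding bp_def by metis
  have "copen (\<Union>i. U i)" unfolding copen_def
  proof
    fix x assume "x \<in> (\<Union>i. U i)"
    then obtain i where "x \<in> U i" by blast
    then obtain n where "cyl x n \<subseteq> U i" using U unfolding copen_def by blast
    then show "\<exists>n. cyl x n \<subseteq> (\<Union>i. U i)" by blast
  qed
  moreover have "meager (\<Union>i. (A i - U i) \<union> (U i - A i))" using U by (intro meager_UN) blast
  moreover have "((\<Union>i. A i) - (\<Union>i. U i)) \<union> ((\<Union>i. U i) - (\<Union>i. A i)) \<subseteq> (\<Union>i. (A i - U i) \<union> (U i - A i))"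
    by blast
  ultimately show ?thesis unfolding bp_def using meager_subset by blast
qed

lemma borel_bp: assumes "A \<in> cantor_borel" shows "bp A"
  using assms unfolding cantor_borel_def
proof (induction rule: sigma_sets.induct)
  case (Basic a) then show ?case using copen_open bp_open by blast
next
  case Empty then show ?case using bp_open copen_def by blast
next
  case (Compl a) then show ?case using bp_compl by blast
next
  case (Union a) then show ?case using bp_UN by blast
qed

lemma not_bp: assumes fl: "\<And>k x. flp k x \<in> A \<longleftrightarrow> x \<notin> A" shows "\<not> bp A"
proof
  assume "bp A"
  then obtain U where U: "copen U" "meager ((A - U) \<union> (U - A))" unfolding bp_def by blast
  define B where "B = UNIV - A"
  have fA: "flp k -` A = B" for k using fl unfolding B_def by auto
  have fB: "flp k -` B = A" for k using fl unfolding B_def by auto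
  show False
  proof (cases "U = {}")
    case True
    then have mA: "meager A" using U(2) by simp
    then have "meager B" using meager_flip[OF mA, of 0] fA by simp
    then have "meager (A \<union> B)" using mA by (rule meager_Un[rotated])
    moreover have "A \<union> B = cyl (\<lambda>_. False) 0" unfolding B_def cyl_def by auto
    ultimately show False using baire[of "\<lambda>_. False" 0] by simp
  next
    case False
    then obtain x where "x \<in> U" by blast
    then obtain n where n: "cyl x n \<subseteq> U" using U(1) unfolding copen_def by blast
    define C where "C = cyl x (Suc n)"
    define C' where "C' = cyl (flp n x) (Suc n)"
    have "C \<subseteq> U" using n cyl_mono[of n "Suc n" x] unfolding C_def by simp
    then have m1: "meager (C \<inter> B)"
      by (intro meager_subset[OF U(2)]) (auto simp: B_def)
    have e1: "flp n -` (C \<inter> B) = C' \<inter> A" unfolding C_def C'_def by (simp add: flip_cyl fB)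
    have m2: "meager (C' \<inter> A)" using meager_flip[OF m1, of n] e1 by simp
    have "cyl (flp (Suc n) x) (Suc n) = C" unfolding C_def
      by (rule cyl_cong) (simp add: flp_def)
    then have "flp (Suc n) -` (C \<inter> B) = C \<inter> A" by (simp add: flip_cyl fB C_def)
    then have m3: "meager (C \<inter> A)" using meager_flip[OF m1, of "Suc n"] by simp
    have e2: "flp n -` (C \<inter> A) = C' \<inter> B" unfolding C_def C'_def by (simp add: flip_cyl fA)
    have m4: "meager (C' \<inter> B)" using meager_flip[OF m3, of n] e2 by simp
    have "C' = (C' \<inter> A) \<union> (C' \<inter> B)" unfolding B_def by blast
    then have "meager C'" using meager_Un[OF m2 m4] by simp
    then show False using baire[of "flp n x" "Suc n"] unfolding C'_def by simp
  qed
qed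

lemma thin_flip: assumes fl: "\<And>k x. flp k x \<in> A \<longleftrightarrow> x \<notin> A" shows "thin A"
  unfolding thin_def
proof (intro allI inj_onI)
  fix n x y assume x: "x \<in> A" and y: "y \<in> A"
    and eq: "restrict x (UNIV - {n}) = restrict y (UNIV - {n})"
  have o: "x i = y i" if "i \<noteq> n" for i
    using fun_cong[OF eq, of i] that by simp
  show "x = y"
  proof (cases "x n = y n")
    case True then show ?thesis by (intro ext) (metis o)
  next
    case False
    then have "y = flp n x" using o unfolding flp_def by (intro ext) auto
    then show ?thesis using x y fl[of n x] by simp
  qed
qed

definition E :: "(nat \<Rightarrow> bool) \<Rightarrow> (nat \<Rightarrow> bool) \<Rightarrow> bool" where
  "E x y \<longleftrightarrow> finite {i. x i \<noteq> y i}"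

definition rep :: "(nat \<Rightarrow> bool) \<Rightarrow> (nat \<Rightarrow> bool)" where
  "rep x = (SOME y. E y x)"

lemma E_refl: "E x x" by (simp add: E_def)
lemma E_sym: "E x y \<Longrightarrow> E y x"
proof -
  have "{i. x i \<noteq> y i} = {i. y i \<noteq> x i}" by auto
  then show "E x y \<Longrightarrow> E y x" unfolding E_def by simp
qed
lemma E_trans: "E x y \<Longrightarrow> E y z \<Longrightarrow> E x z"
proof -
  assume "E x y" "E y z"
  moreover have "{i. x i \<noteq> z i} \<subseteq> {i. x i \<noteq> y i} \<union> {i. y i \<noteq> z i}" by auto
  ultimately show ?thesis unfolding E_def by (meson finite_Un finite_subset)
qed

lemma rep_E: "E (rep x) x"
  unfolding rep_def by (rule someI[of _ x]) (rule E_refl)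

lemma rep_eq: assumes "E x x'" shows "rep x = rep x'"
proof -
  have "(\<lambda>y. E y x) = (\<lambda>y. E y x')"
    using E_trans[OF _ assms] E_trans[OF _ E_sym[OF assms]] by (intro ext iffI)
  then show ?thesis unfolding rep_def by simp
qed

lemma E_flip: "E x (flp k x)"
proof -
  have "{i. x i \<noteq> flp k x i} = {k}" by (auto simp: flp_def)
  then show ?thesis unfolding E_def by simp
qed

definition D :: "(nat \<Rightarrow> bool) \<Rightarrow> nat set" where
  "D x = {i. x i \<noteq> rep x i}"

lemma D_fin: "finite (D x)"
  using E_sym[OF rep_E[of x]] unfolding E_def D_def by simp

lemma D_flip: "D (flp k x) = (if k \<in> D x then D x - {k} else insert k (D x))"
proof -
  have "rep (flp k x) = rep x" using rep_eq[OF E_flip] by simp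
  then show ?thesis unfolding D_def by (auto simp: flp_def)
qed

definition T0 :: "(nat \<Rightarrow> bool) set" where
  "T0 = {x. even (card (D x))}"

lemma T0_flip: "flp k x \<in> T0 \<longleftrightarrow> x \<notin> T0"
proof (cases "k \<in> D x")
  case True
  have pos: "card (D x) > 0" using True D_fin by (auto simp: card_gt_0_iff)
  have c: "card (D (flp k x)) = card (D x) - 1"
    unfolding D_flip using True D_fin by (simp add: card_Diff_singleton)
  have "even (card (D x) - 1) \<longleftrightarrow> \<not> even (card (D x))"
    using pos by (cases "card (D x)") auto
  then show ?thesis unfolding T0_def using c by simp
next
  case False
  have c: "card (D (flp k x)) = Suc (card (D x))"
    unfolding D_flip using False D_fin by simp
  then show ?thesis unfolding T0_def by simp
qed

theorem corollary14:
  shows "\<exists>T0 T1 :: (nat \<Rightarrow> bool) set.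
           thin T0 \<and> thin T1 \<and> T0 \<inter> T1 = {} \<and> T0 \<union> T1 = UNIV \<and>
           T0 \<notin> cantor_borel \<and> T1 \<notin> cantor_borel"
proof -
  have f1: "\<And>k x. flp k x \<in> T0 \<longleftrightarrow> x \<notin> T0" by (rule T0_flip)
  have f2: "\<And>k x. flp k x \<in> (UNIV - T0) \<longleftrightarrow> x \<notin> (UNIV - T0)" using T0_flip by simp
  have n1: "T0 \<notin> cantor_borel" using not_bp[OF f1] borel_bp by blast
  have n2: "UNIV - T0 \<notin> cantor_borel" using not_bp[OF f2] borel_bp by blast
  have t1: "thin T0" by (rule thin_flip[OF f1])
  have t2: "thin (UNIV - T0)" by (rule thin_flip[OF f2])
  have "thin T0 \<and> thin (UNIV - T0) \<and> T0 \<inter> (UNIV - T0) = {} \<and> T0 \<union> (UNIV - T0) = UNIV \<and>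
           T0 \<notin> cantor_borel \<and> (UNIV - T0) \<notin> cantor_borel"
    using n1 n2 t1 t2 by blast
  then show ?thesis by blast
qed

end
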